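(* Let $Y=\{(x,y)\in\mathbb{R}^2:(x/a)^2+y^2=1\}$ with $1<a\le\sqrt2$, and let $p\in Y$. There exists a unique equilateral triangle inscribed in $Y$ (all three vertices on $Y$) having $p$ as one of its vertices.
   Context: Equilateral means with respect to the Euclidean metric on $\mathbb{R}^2$. *)

theory Defs
  imports "HOL-Analysis.Analysis"
begin

definition ellipseY :: "real \<Rightarrow> (real \<times> real) set" where
  "ellipseY a = {(x, y). (x / a)^2 + y^2 = 1}"

definition edist2 :: "real \<times> real \<Rightarrow> real \<times> real \<Rightarrow> real" where
  "edist2 u v = sqrt ((fst u - fst v)^2 + (snd u - snd v)^2)"

definition equilateral_triangle :: "(real \<times> real) set \<Rightarrow> bool" where
  "equilateral_triangle T \<longleftrightarrow> (\<exists>u v w. T = {u, v, w} \<and> edist2 u v > 0 \<and>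
      edist2 u v = edist2 v w \<and> edist2 v w = edist2 w u)"

end

theory Submission imports Defs begin


lemma sin_treble: "sin (3 * x) = 3 * sin x - 4 * sin x ^ 3" for x :: real
proof -
  have "sin (3 * x) = sin (2*x + x)" by simp
  also have "\<dots> = 3 * sin x - 4 * sin x ^ 3"
    unfolding sin_add cos_double sin_double
    using sin_cos_squared_add[of x] by algebra
  finally show ?thesis .
qed

lemma poly_id0:
  fixes c s r xx zz b :: real
  assumes "c^2 + s^2 = 1" "r^2 = 3"
  shows "2 * (xx * c + zz * s) * ((c + r * s)^2 + b * (s - r * c)^2)
       - 4 * (xx * (c + r * s) + zz * (s - r * c)) * (c^2 + b * s^2)
     = 4 * (b * xx + r * zz) * c + 4 * (zz - r * b * xx) * s + 2 * (b-1) * (xx * (4 * c^3 - 3 * c) + zz * (3 * s - 4 * s^3))"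
  using assms by algebra


lemma zero_unique:
  fixes g g' :: "real \<Rightarrow> real"
  assumes der: "\<And>u. (g has_real_derivative g' u) (at u)"
  and per: "\<And>u v. cos u = cos v \<Longrightarrow> sin u = sin v \<Longrightarrow> g u = g v"
  and anti: "\<And>u. g (u + pi) = - g u"
  and zc: "\<And>u. g u = 0 \<Longrightarrow> \<bar>cos u\<bar> \<le> 1/4"
  and dneg: "\<And>u. \<bar>cos u\<bar> \<le> 1/4 \<Longrightarrow> sin u > 0 \<Longrightarrow> g' u < 0"
  and g0: "g 0 > 0"
  shows "\<exists>u0. g u0 = 0 \<and> (\<forall>u. g u = 0 \<longrightarrow> (cos u = cos u0 \<and> sin u = sin u0) \<or> (cos u = - cos u0 \<and> sin u = - sin u0))"
proof -
  have gpi: "g pi = - g 0" using anti[of 0] by simp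
  have cont: "\<And>x. isCont g x" using der DERIV_isCont by blast
  obtain u0 where u0: "0 \<le> u0" "u0 \<le> pi" "g u0 = 0"
    using IVT2[of g pi 0 0] gpi g0 cont by force
  have nz: "\<And>x. 0 < x \<Longrightarrow> x < y \<Longrightarrow> y < pi \<Longrightarrow> g x = 0 \<Longrightarrow> g y = 0 \<Longrightarrow> False" for y
  proof -
    fix x assume x: "0 < x" "x < y" "y < pi" "g x = 0" "g y = 0"
    obtain z where z: "x < z" "z < y" "g y - g x = (y - x) * g' z"
      using MVT2[of x y g g'] der x by blast
    have "g' z = 0" using z x by simp
    moreover have "sin z > 0" using z x by (intro sin_gt_zero) auto
    moreover have "cos y \<le> cos z" "cos z \<le> cos x"
      using z x by (auto intro!: cos_monotone_0_pi_le)
    moreover have "\<bar>cos x\<bar> \<le> 1/4" "\<bar>cos y\<bar> \<le> 1/4" using zc x by auto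
    ultimately have "\<bar>cos z\<bar> \<le> 1/4" "sin z > 0" by (auto simp: abs_le_iff)
    then have "g' z < 0" using dneg[of z] by simp
    with \<open>g' z = 0\<close> show False by simp
  qed
  have u0i: "0 < u0" "u0 < pi"
  proof -
    show "0 < u0"
    proof (rule ccontr)
      assume "\<not> 0 < u0" then have "u0 = 0" using u0 by simp
      then show False using zc[of u0] u0 by simp
    qed
    show "u0 < pi"
    proof (rule ccontr)
      assume "\<not> u0 < pi" then have "u0 = pi" using u0 by simp
      then show False using zc[of u0] u0 by simp
    qed
  qed
  have key: "cos u = cos u0 \<and> sin u = sin u0" if "g u = 0" "sin u > 0" for u
  proof -
    define v where "v = arccos (cos u)"
    have cv: "cos v = cos u" unfolding v_def by simp
    have sv: "sin v = sin u"
      unfolding v_def using sin_arccos_abs[of "cos u"] sin_cos_sqrt[of u] that by simp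
    have vb: "0 \<le> v" "v \<le> pi" unfolding v_def using arccos_bounded by auto
    have gv: "g v = 0" using per[OF cv sv] that by simp
    have "v \<noteq> 0" "v \<noteq> pi" using sv that by auto
    with vb have vi: "0 < v" "v < pi" by auto
    have "v = u0"
    proof (rule ccontr)
      assume "v \<noteq> u0"
      then consider "v < u0" | "u0 < v" by linarith
      then show False
      proof cases
        case 1 then show ?thesis using nz[of v u0] vi u0i u0 gv by blast
      next
        case 2 then show ?thesis using nz[of u0 v] vi u0i u0 gv by blast
      qed
    qed
    then show ?thesis using cv sv by simp
  qed
  show ?thesis
  proof (intro exI conjI allI impI)
    show "g u0 = 0" by fact
    fix u assume gu: "g u = 0"
    consider "sin u > 0" | "sin u < 0" | "sin u = 0" by linarith
    then show "(cos u = cos u0 \<and> sin u = sin u0) \<or> (cos u = - cos u0 \<and> sin u = - sin u0)"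
    proof cases
      case 1 then show ?thesis using key gu by blast
    next
      case 2
      have "g (u + pi) = 0" using anti[of u] gu by simp
      moreover have "sin (u + pi) > 0" using 2 by simp
      ultimately have "cos (u + pi) = cos u0 \<and> sin (u + pi) = sin u0" using key by blast
      then show ?thesis by simp
    next
      case 3
      then have "cos u ^ 2 = 1" using sin_cos_squared_add[of u] by simp
      then have "\<bar>cos u\<bar> = 1" by (auto simp add: power2_eq_1_iff)
      then show ?thesis using zc[OF gu] by simp
    qed
  qed
qed


definition Ft :: "real \<Rightarrow> real \<Rightarrow> real \<Rightarrow> real \<Rightarrow> real" where
  "Ft b X Z t = (b * X + sqrt 3 * Z) * cos t + (Z - sqrt 3 * b * X) * sin t
      + (b - 1) / 2 * (X * cos (3 * t) + Z * sin (3 * t))"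

lemma cs_bound:
  fixes X Z u v :: real
  assumes "u^2 + v^2 = 1"
  shows "\<bar>X * u + Z * v\<bar> \<le> sqrt (X^2 + Z^2)"
proof -
  have "(X * u + Z * v)^2 \<le> X^2 + Z^2"
  proof -
    have "(X^2 + Z^2) * (u^2 + v^2) - (X * u + Z * v)^2 = (X * v - Z * u)^2"
      by (simp add: power2_eq_square algebra_simps)
    then show ?thesis using assms by (metis diff_ge_0_iff_ge mult.right_neutral zero_le_power2)
  qed
  then show ?thesis by (metis real_le_rsqrt real_sqrt_abs real_sqrt_le_mono)
qed

lemma F_zero:
  fixes b X Z :: real
  assumes b1: "1 \<le> b" and b2: "b \<le> 2" and nz: "X \<noteq> 0 \<or> Z \<noteq> 0"
  shows "\<exists>t0. Ft b X Z t0 = 0 \<and> (\<forall>t. Ft b X Z t = 0 \<longrightarrow>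
            (cos t = cos t0 \<and> sin t = sin t0) \<or> (cos t = - cos t0 \<and> sin t = - sin t0))"
proof -
  define P where "P = b * X + sqrt 3 * Z"
  define S where "S = Z - sqrt 3 * b * X"
  define C where "C = sqrt (P^2 + S^2)"
  define A where "A = sqrt (X^2 + Z^2)"
  define k where "k = (b - 1) / 2"
  have r3: "sqrt 3 ^ 2 = (3::real)" by simp
  have PS: "P^2 + S^2 = 4 * (b^2 * X^2 + Z^2)"
  proof -
    have "(b * X + sqrt 3 * Z)^2 + (Z - sqrt 3 * b * X)^2 = (b^2 * X^2 + Z^2) * (1 + sqrt 3 * sqrt 3)"
      by (simp add: power2_eq_square algebra_simps)
    then show ?thesis unfolding P_def S_def by simp
  qed
  have XZpos: "X^2 + Z^2 > 0" using nz by (auto simp: add_pos_nonneg add_nonneg_pos)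
  have Apos: "A > 0" unfolding A_def using XZpos by simp
  have "X^2 \<le> b^2 * X^2" using b1
    by (metis mult_right_mono mult_1 one_le_power zero_le_power2 order_trans zero_le_one)
  then have "4 * (X^2 + Z^2) \<le> P^2 + S^2" unfolding PS by simp
  then have "sqrt (4 * (X^2 + Z^2)) \<le> C" unfolding C_def by (rule real_sqrt_le_mono)
  moreover have "sqrt (4 * (X^2 + Z^2)) = 2 * A" unfolding A_def real_sqrt_mult by simp
  ultimately have CA: "2 * A \<le> C" by simp
  have Cpos: "C > 0" using CA Apos by linarith
  have k0: "0 \<le> k" and k1: "k \<le> 1/2" unfolding k_def using b1 b2 by auto
  have kA: "k * A \<le> C / 4"
  proof -
    have "k * A \<le> 1/2 * A" using k1 Apos by (intro mult_right_mono) auto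
    then show ?thesis using CA by linarith
  qed
  have C2: "C^2 = P^2 + S^2" unfolding C_def by simp
  have "(P/C)^2 + (S/C)^2 = (P^2 + S^2) / C^2" by (simp add: power_divide add_divide_distrib)
  also have "\<dots> = 1" using Cpos by (simp add: C2[symmetric])
  finally have "(P/C)^2 + (S/C)^2 = 1" .
  then obtain psi where psi: "P / C = cos psi" "S / C = sin psi" by (rule sincos_total_2pi) auto
  have Pc: "P = C * cos psi" and Sc: "S = C * sin psi" using psi Cpos by (auto simp: field_simps)
  define h where "h t = X * cos (3 * t) + Z * sin (3 * t)" for t
  define h' where "h' t = 3 * (Z * cos (3 * t) - X * sin (3 * t))" for t
  have hb: "\<bar>h t\<bar> \<le> A" for t
    unfolding h_def A_def by (rule cs_bound) simp
  have hb': "\<bar>h' t\<bar> \<le> 3 * A" for t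
  proof -
    have "\<bar>Z * cos (3 * t) + (- X) * sin (3 * t)\<bar> \<le> sqrt (Z^2 + (-X)^2)" by (rule cs_bound) simp
    then have "\<bar>Z * cos (3 * t) - X * sin (3 * t)\<bar> \<le> A" unfolding A_def by (simp add: add.commute)
    then show ?thesis unfolding h'_def by (simp add: abs_mult)
  qed
  have h_anti: "h (t + pi) = - h t" for t
  proof -
    have "cos (3 * (t + pi)) = - cos (3 * t)"
      using cos_treble_cos[of "t + pi"] cos_treble_cos[of t] by (simp del: distrib_left_numeral add: power3_eq_cube)
    moreover have "sin (3 * (t + pi)) = - sin (3 * t)"
      using sin_treble[of "t + pi"] sin_treble[of t] by (simp del: distrib_left_numeral add: power3_eq_cube)
    ultimately show ?thesis unfolding h_def by simp
  qed
  define g where "g u = Ft b X Z (u + psi)" for u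
  have gform: "g u = C * cos u + k * h (u + psi)" for u
  proof -
    have e: "cos u = cos (u + psi) * cos psi + sin (u + psi) * sin psi"
      using cos_diff[of "u + psi" psi] by simp
    have 1: "P * cos (u + psi) + S * sin (u + psi) = C * cos u"
      unfolding Pc Sc e by (simp add: algebra_simps)
    have 2: "Ft b X Z (u + psi) = P * cos (u + psi) + S * sin (u + psi) + k * h (u + psi)"
      unfolding Ft_def P_def S_def k_def h_def by simp
    show ?thesis unfolding g_def 2 1 ..
  qed
  define g' where "g' u = - C * sin u + k * h' (u + psi)" for u
  have gfun: "g = (\<lambda>u. C * cos u + k * (X * cos (3 * (u + psi)) + Z * sin (3 * (u + psi))))"
    using gform unfolding h_def by auto
  have der: "(g has_real_derivative g' u) (at u)" for u
    unfolding gfun g'_def h'_def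
    by (auto intro!: derivative_eq_intros simp: algebra_simps)
  have per: "g u = g v" if "cos u = cos v" "sin u = sin v" for u v
    unfolding gform h_def using that by (simp add: cos_treble_cos sin_treble cos_add sin_add)
  have anti: "g (u + pi) = - g u" for u
  proof -
    have "h (u + pi + psi) = - h (u + psi)" using h_anti[of "u + psi"] by (simp add: add_ac)
    then show ?thesis unfolding gform by simp
  qed
  have zc: "\<bar>cos u\<bar> \<le> 1/4" if "g u = 0" for u
  proof -
    have "C * cos u = - (k * h (u + psi))" using that gform[of u] by simp
    then have "C * \<bar>cos u\<bar> = k * \<bar>h (u + psi)\<bar>" using Cpos k0 by (metis abs_minus_cancel abs_mult abs_of_nonneg less_imp_le)
    also have "\<dots> \<le> k * A" using hb k0 by (intro mult_left_mono) auto
    finally have "C * \<bar>cos u\<bar> \<le> C * (1/4)" using kA by simp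
    then show ?thesis using Cpos by simp
  qed
  have dneg: "g' u < 0" if "\<bar>cos u\<bar> \<le> 1/4" "sin u > 0" for u
  proof -
    have "cos u ^ 2 \<le> (1/4)^2" using that(1) by (metis abs_ge_zero power2_abs power_mono)
    moreover have "(1/4::real)^2 = 1/16" by (simp add: power2_eq_square)
    ultimately have "sin u ^ 2 \<ge> 15/16" using sin_cos_squared_add[of u] by linarith
    then have s34: "sin u > 3/4"
    proof -
      have "\<not> sin u \<le> 3/4"
      proof
        assume "sin u \<le> 3/4"
        then have "sin u ^ 2 \<le> (3/4)^2" using that(2) by (intro power_mono) auto
        then show False using \<open>sin u ^ 2 \<ge> 15/16\<close> by (simp add: power2_eq_square)
      qed
      then show ?thesis by simp
    qed
    have "k * h' (u + psi) \<le> k * (3 * A)" using hb'[of "u + psi"] k0 by (intro mult_left_mono) auto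
    also have "\<dots> \<le> 3 * (C / 4)" using kA by (simp add: mult_ac)
    finally have "k * h' (u + psi) \<le> 3 * C / 4" by simp
    moreover have "C * sin u > C * (3/4)" using s34 Cpos by simp
    ultimately show ?thesis unfolding g'_def by simp
  qed
  have g0: "g 0 > 0"
  proof -
    have "- (k * A) \<le> k * h psi"
      using hb[of psi] k0 by (metis abs_le_iff minus_le_iff mult_left_mono mult_minus_right)
    then show ?thesis using gform[of 0] kA Cpos by simp
  qed
  obtain u0 where u0: "g u0 = 0" and uu: "\<And>u. g u = 0 \<Longrightarrow> (cos u = cos u0 \<and> sin u = sin u0) \<or> (cos u = - cos u0 \<and> sin u = - sin u0)"
    using zero_unique[of g g', OF der per anti zc dneg g0] by blast
  show ?thesis
  proof (intro exI conjI allI impI)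
    show "Ft b X Z (u0 + psi) = 0" using u0 unfolding g_def .
    fix t assume "Ft b X Z t = 0"
    then have "g (t - psi) = 0" unfolding g_def by simp
    then have c: "(cos (t - psi) = cos u0 \<and> sin (t - psi) = sin u0) \<or> (cos (t - psi) = - cos u0 \<and> sin (t - psi) = - sin u0)"
      using uu by blast
    have ct: "cos t = cos (t - psi) * cos psi - sin (t - psi) * sin psi"
      and st: "sin t = sin (t - psi) * cos psi + cos (t - psi) * sin psi"
      using cos_add[of "t - psi" psi] sin_add[of "t - psi" psi] by simp_all
    show "(cos t = cos (u0 + psi) \<and> sin t = sin (u0 + psi)) \<or> (cos t = - cos (u0 + psi) \<and> sin t = - sin (u0 + psi))"
      using c unfolding ct st cos_add sin_add by auto
  qed
qed


definition Lv :: "real \<Rightarrow> real \<Rightarrow> real \<Rightarrow> real \<Rightarrow> real" where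
  "Lv X Z c s = 2 * (X * c + Z * s)"
definition Qv :: "real \<Rightarrow> real \<Rightarrow> real \<Rightarrow> real" where
  "Qv b c s = c^2 + b * s^2"
definition Rc :: "real \<Rightarrow> real \<Rightarrow> real" where
  "Rc c s = (c + sqrt 3 * s) / 2"
definition Rs :: "real \<Rightarrow> real \<Rightarrow> real" where
  "Rs c s = (s - sqrt 3 * c) / 2"

lemma LR: "Lv X Z (Rc c s) (Rs c s) = X * (c + sqrt 3 * s) + Z * (s - sqrt 3 * c)"
  unfolding Lv_def Rc_def Rs_def by simp

lemma half_sq0: "((u::real) / 2)^2 + b * (v / 2)^2 = (u^2 + b * v^2) / 4"
  by (simp add: power_divide field_simps)

lemma QR: "Qv b (Rc c s) (Rs c s) = ((c + sqrt 3 * s)^2 + b * (s - sqrt 3 * c)^2) / 4"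
  unfolding Qv_def Rc_def Rs_def by (rule half_sq0)

lemma F_eq:
  "Lv X Z (cos t) (sin t) * Qv b (Rc (cos t) (sin t)) (Rs (cos t) (sin t))
   - Lv X Z (Rc (cos t) (sin t)) (Rs (cos t) (sin t)) * Qv b (cos t) (sin t) = Ft b X Z t"
proof -
  define c where "c = cos t"
  define s where "s = sin t"
  define r where "r = sqrt (3::real)"
  have cs: "c^2 + s^2 = 1" unfolding c_def s_def by simp
  have r3: "r^2 = 3" unfolding r_def by simp
  define E where "E = (c + r * s)^2 + b * (s - r * c)^2"
  define M where "M = X * (c + r * s) + Z * (s - r * c)"
  have P: "2 * (X * c + Z * s) * E - 4 * M * (c^2 + b * s^2)
     = 4 * (b * X + r * Z) * c + 4 * (Z - r * b * X) * s + 2 * (b-1) * (X * (4 * c^3 - 3 * c) + Z * (3 * s - 4 * s^3))"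
    unfolding E_def M_def by (rule poly_id0[OF cs r3])
  have L: "Lv X Z (cos t) (sin t) * Qv b (Rc (cos t) (sin t)) (Rs (cos t) (sin t))
   - Lv X Z (Rc (cos t) (sin t)) (Rs (cos t) (sin t)) * Qv b (cos t) (sin t)
   = 2 * (X * c + Z * s) * (E / 4) - M * (c^2 + b * s^2)"
    unfolding LR QR by (simp add: Lv_def Qv_def E_def M_def c_def s_def r_def)
  also have "\<dots> = (2 * (X * c + Z * s) * E - 4 * M * (c^2 + b * s^2)) / 4" by simp
  finally have L': "Lv X Z (cos t) (sin t) * Qv b (Rc (cos t) (sin t)) (Rs (cos t) (sin t))
   - Lv X Z (Rc (cos t) (sin t)) (Rs (cos t) (sin t)) * Qv b (cos t) (sin t)
   = (2 * (X * c + Z * s) * E - 4 * M * (c^2 + b * s^2)) / 4" .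
  have R: "Ft b X Z t = (4 * (b * X + r * Z) * c + 4 * (Z - r * b * X) * s + 2 * (b-1) * (X * (4 * c^3 - 3 * c) + Z * (3 * s - 4 * s^3))) / 4"
    unfolding Ft_def cos_treble_cos sin_treble c_def[symmetric] s_def[symmetric] r_def[symmetric]
    by (simp add: field_simps)
  show ?thesis unfolding L' R P ..
qed

lemma ell_iff:
  assumes "a > 0"
  shows "(x, y) \<in> ellipseY a \<longleftrightarrow> x^2 + a^2 * y^2 = a^2"
  unfolding ellipseY_def using assms by (auto simp: power_divide field_simps)

lemma ell_line:
  assumes "a > 0" "x0^2 + a^2 * y0^2 = a^2"
  shows "(x0 + \<rho> * c, y0 + \<rho> * s) \<in> ellipseY a \<longleftrightarrow>
         \<rho> * (Lv x0 (a^2 * y0) c s + \<rho> * Qv (a^2) c s) = 0"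
proof -
  have "(x0 + \<rho> * c)^2 + a^2 * (y0 + \<rho> * s)^2 - a^2 =
        \<rho> * (Lv x0 (a^2 * y0) c s + \<rho> * Qv (a^2) c s) + (x0^2 + a^2 * y0^2 - a^2)"
    unfolding Lv_def Qv_def by (simp add: power2_eq_square algebra_simps)
  then have E: "(x0 + \<rho> * c)^2 + a^2 * (y0 + \<rho> * s)^2 - a^2 =
        \<rho> * (Lv x0 (a^2 * y0) c s + \<rho> * Qv (a^2) c s)" using assms(2) by simp
  show ?thesis unfolding ell_iff[OF assms(1)] by (metis E eq_iff_diff_eq_0)
qed

lemma Qpos: "1 \<le> b \<Longrightarrow> c^2 + s^2 = 1 \<Longrightarrow> Qv b c s > 0"
proof -
  assume "1 \<le> b" "c^2 + s^2 = 1"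
  moreover have "(b - 1) * s^2 \<ge> 0" using \<open>1 \<le> b\<close> by simp
  ultimately show ?thesis unfolding Qv_def by (simp add: algebra_simps)
qed

lemma R_unit: "c^2 + s^2 = 1 \<Longrightarrow> (Rc c s)^2 + (Rs c s)^2 = 1"
proof -
  assume h: "c^2 + s^2 = 1"
  have "(Rc c s)^2 + (Rs c s)^2 = ((c + sqrt 3 * s)^2 + 1 * (s - sqrt 3 * c)^2) / 4"
    unfolding Rc_def Rs_def using half_sq0[of "c + sqrt 3 * s" 1 "s - sqrt 3 * c"] by simp
  also have "(c + sqrt 3 * s)^2 + 1 * (s - sqrt 3 * c)^2 = (c^2 + s^2) * (1 + sqrt 3 * sqrt 3)"
    by (simp add: power2_eq_square algebra_simps)
  finally show ?thesis using h by simp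
qed

lemma edist2_sym: "edist2 u v = edist2 v u"
  unfolding edist2_def by (simp add: power2_commute)

lemma edist_line: "c^2 + s^2 = 1 \<Longrightarrow> edist2 (x, y) (x + \<rho> * c, y + \<rho> * s) = \<bar>\<rho>\<bar>"
proof -
  assume h: "c^2 + s^2 = 1"
  have "(x - (x + \<rho> * c))^2 + (y - (y + \<rho> * s))^2 = \<rho>^2 * (c^2 + s^2)"
    by (simp add: power2_eq_square algebra_simps)
  then show ?thesis unfolding edist2_def using h by simp
qed

lemma half_sq: "((u::real) / 2)^2 + b * (v / 2)^2 = (u^2 + b * v^2) / 4"
  by (simp add: power_divide field_simps)

lemma edist_qr: "c^2 + s^2 = 1 \<Longrightarrow>
   edist2 (x + \<rho> * Rc c s, y + \<rho> * Rs c s) (x + \<rho> * c, y + \<rho> * s) = \<bar>\<rho>\<bar>"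
proof -
  assume h: "c^2 + s^2 = 1"
  have e1: "x + \<rho> * Rc c s - (x + \<rho> * c) = \<rho> * ((sqrt 3 * s - c) / 2)"
    unfolding Rc_def by (simp add: field_simps)
  have e2: "y + \<rho> * Rs c s - (y + \<rho> * s) = \<rho> * ((- s - sqrt 3 * c) / 2)"
    unfolding Rs_def by (simp add: field_simps)
  have "(\<rho> * ((sqrt 3 * s - c) / 2))^2 + (\<rho> * ((- s - sqrt 3 * c) / 2))^2
      = \<rho>^2 * (((sqrt 3 * s - c) / 2)^2 + 1 * ((- s - sqrt 3 * c) / 2)^2)"
    by (simp only: power_mult_distrib mult_1_left distrib_left)
  also have "\<dots> = \<rho>^2 * (((sqrt 3 * s - c)^2 + 1 * (- s - sqrt 3 * c)^2) / 4)"
    by (simp only: half_sq)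
  also have "(sqrt 3 * s - c)^2 + 1 * (- s - sqrt 3 * c)^2 = (c^2 + s^2) * (1 + sqrt 3 * sqrt 3)"
    by (simp add: power2_eq_square algebra_simps)
  finally have S: "(\<rho> * ((sqrt 3 * s - c) / 2))^2 + (\<rho> * ((- s - sqrt 3 * c) / 2))^2 = \<rho>^2"
    using h by simp
  show ?thesis unfolding edist2_def fst_conv snd_conv e1 e2 S by simp
qed

lemma orient1:
  fixes w1 w2 v1 v2 D :: real
  assumes "w1^2 + w2^2 = D" "D > 0" "w1 * v1 + w2 * v2 = D / 2" "w1 * v2 - w2 * v1 = - (sqrt 3 / 2) * D"
  shows "v1 = Rc w1 w2 \<and> v2 = Rs w1 w2"
proof -
  have "D * v1 = (w1^2 + w2^2) * v1" using assms(1) by simp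
  also have "\<dots> = w1 * (w1 * v1 + w2 * v2) - w2 * (w1 * v2 - w2 * v1)"
    by (simp add: power2_eq_square algebra_simps)
  also have "\<dots> = D * Rc w1 w2" unfolding assms(3,4) Rc_def by (simp add: algebra_simps)
  finally have 1: "v1 = Rc w1 w2" using assms(2) by simp
  have "D * v2 = (w1^2 + w2^2) * v2" using assms(1) by simp
  also have "\<dots> = w2 * (w1 * v1 + w2 * v2) + w1 * (w1 * v2 - w2 * v1)"
    by (simp add: power2_eq_square algebra_simps)
  also have "\<dots> = D * Rs w1 w2" unfolding assms(3,4) Rs_def by (simp add: algebra_simps)
  finally have 2: "v2 = Rs w1 w2" using assms(2) by simp
  show ?thesis using 1 2 by simp
qed

lemma orient:
  fixes w1 w2 v1 v2 D :: real
  assumes "w1^2 + w2^2 = D" "v1^2 + v2^2 = D" "(v1 - w1)^2 + (v2 - w2)^2 = D" "D > 0"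
  shows "(v1 = Rc w1 w2 \<and> v2 = Rs w1 w2) \<or> (w1 = Rc v1 v2 \<and> w2 = Rs v1 v2)"
proof -
  have dot: "w1 * v1 + w2 * v2 = D / 2"
  proof -
    have "(v1 - w1)^2 + (v2 - w2)^2 = (v1^2 + v2^2) + (w1^2 + w2^2) - 2 * (w1 * v1 + w2 * v2)"
      by (simp add: power2_eq_square algebra_simps)
    then show ?thesis using assms(1-3) by simp
  qed
  have lag: "(w1 * v2 - w2 * v1)^2 = (w1^2 + w2^2) * (v1^2 + v2^2) - (w1 * v1 + w2 * v2)^2"
    by (simp add: power2_eq_square algebra_simps)
  have "(w1 * v2 - w2 * v1)^2 = ((sqrt 3 / 2) * D)^2"
    unfolding lag assms(1,2) dot by (simp add: power2_eq_square power_mult_distrib field_simps)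
  then have "w1 * v2 - w2 * v1 = (sqrt 3 / 2) * D \<or> w1 * v2 - w2 * v1 = - ((sqrt 3 / 2) * D)"
    by (simp add: power2_eq_iff)
  then show ?thesis
  proof
    assume h: "w1 * v2 - w2 * v1 = (sqrt 3 / 2) * D"
    have d2: "v1 * w1 + v2 * w2 = D / 2" using dot by (simp add: mult.commute)
    have "v1 * w2 - v2 * w1 = - (w1 * v2 - w2 * v1)" by (simp add: algebra_simps)
    with h have c2: "v1 * w2 - v2 * w1 = - (sqrt 3 / 2) * D" by (simp only: minus_mult_left)
    have "w1 = Rc v1 v2 \<and> w2 = Rs v1 v2" by (rule orient1[OF assms(2) assms(4) d2 c2])
    then show ?thesis by simp
  next
    assume h: "w1 * v2 - w2 * v1 = - ((sqrt 3 / 2) * D)"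
    have "v1 = Rc w1 w2 \<and> v2 = Rs w1 w2" using h by (intro orient1[OF assms(1) assms(4) dot]) simp
    then show ?thesis by simp
  qed
qed


lemma ed_sq: "edist2 x y = d \<Longrightarrow> (fst x - fst y)^2 + (snd x - snd y)^2 = d^2"
  unfolding edist2_def by (metis real_sqrt_pow2 add_nonneg_nonneg zero_le_power2)

lemma Rc_scale: "Rc (d * c) (d * s) = d * Rc c s"
  unfolding Rc_def by (simp add: algebra_simps)
lemma Rs_scale: "Rs (d * c) (d * s) = d * Rs c s"
  unfolding Rs_def by (simp add: algebra_simps)

lemma tri_p:
  assumes "T = {u, v, w}" "edist2 u v = d" "edist2 v w = d" "edist2 w u = d" "p \<in> T"
  shows "\<exists>q r. T = {p, q, r} \<and> edist2 p q = d \<and> edist2 p r = d \<and> edist2 q r = d"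
proof -
  have s: "\<And>x y. edist2 x y = edist2 y x" by (rule edist2_sym)
  from assms(5,1) consider "p = u" | "p = v" | "p = w" by auto
  then show ?thesis
  proof cases
    case 1 then show ?thesis using assms s by (intro exI[of _ v] exI[of _ w]) auto
  next
    case 2 then show ?thesis using assms s by (intro exI[of _ u] exI[of _ w]) auto
  next
    case 3 then show ?thesis using assms s by (intro exI[of _ u] exI[of _ v]) auto
  qed
qed

lemma canon:
  assumes T: "T = {p, q, r}" and pq: "edist2 p q = d" and pr: "edist2 p r = d" and qr: "edist2 q r = d"
    and d: "d > 0"
  shows "\<exists>q' r'. T = {p, q', r'} \<and> (fst r' - fst p)^2 + (snd r' - snd p)^2 = d^2
     \<and> fst q' - fst p = Rc (fst r' - fst p) (snd r' - snd p)
     \<and> snd q' - snd p = Rs (fst r' - fst p) (snd r' - snd p)"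
proof -
  define w1 w2 v1 v2 where "w1 = fst r - fst p" "w2 = snd r - snd p" "v1 = fst q - fst p" "v2 = snd q - snd p"
  have 1: "w1^2 + w2^2 = d^2" using ed_sq[OF pr] unfolding w1_w2_v1_v2_def by (simp add: power2_commute)
  have 2: "v1^2 + v2^2 = d^2" using ed_sq[OF pq] unfolding w1_w2_v1_v2_def by (simp add: power2_commute)
  have 3: "(v1 - w1)^2 + (v2 - w2)^2 = d^2" using ed_sq[OF qr] unfolding w1_w2_v1_v2_def by simp
  have "d^2 > 0" using d by simp
  from orient[OF 1 2 3 this] show ?thesis
  proof
    assume h: "v1 = Rc w1 w2 \<and> v2 = Rs w1 w2"
    show ?thesis using T 1 h unfolding w1_w2_v1_v2_def by (intro exI[of _ q] exI[of _ r]) auto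
  next
    assume h: "w1 = Rc v1 v2 \<and> w2 = Rs v1 v2"
    have "T = {p, r, q}" using T by auto
    then show ?thesis using 2 h unfolding w1_w2_v1_v2_def by (intro exI[of _ r] exI[of _ q]) auto
  qed
qed

theorem mainTheorem17:
  fixes a :: real and p :: "real \<times> real"
  assumes "1 < a" and "a \<le> sqrt 2" and "p \<in> ellipseY a"
  shows "\<exists>!T. equilateral_triangle T \<and> T \<subseteq> ellipseY a \<and> p \<in> T"
proof -
  obtain x0 y0 where p: "p = (x0, y0)" by (cases p)
  have apos: "a > 0" using assms(1) by simp
  have b1: "1 \<le> a^2" using assms(1) by (simp add: one_le_power)
  have "a^2 \<le> (sqrt 2)^2" using assms(2) apos by (intro power_mono) auto
  then have b2: "a^2 \<le> 2" by simp
  have pe: "x0^2 + a^2 * y0^2 = a^2" using assms(3) p ell_iff[OF apos] by simp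
  define X where "X = x0"
  define Z where "Z = a^2 * y0"
  have XZ: "X \<noteq> 0 \<or> Z \<noteq> 0"
  proof (rule ccontr)
    assume "\<not> (X \<noteq> 0 \<or> Z \<noteq> 0)"
    then have "x0 = 0" "y0 = 0" using apos unfolding X_def Z_def by auto
    then show False using pe apos by simp
  qed
  obtain t0 where t0: "Ft (a^2) X Z t0 = 0"
    and tu: "\<And>t. Ft (a^2) X Z t = 0 \<Longrightarrow> (cos t = cos t0 \<and> sin t = sin t0) \<or> (cos t = - cos t0 \<and> sin t = - sin t0)"
    using F_zero[OF b1 b2 XZ] by blast
  define c0 where "c0 = cos t0"
  define s0 where "s0 = sin t0"
  have cs0: "c0^2 + s0^2 = 1" unfolding c0_def s0_def by simp
  define L0 where "L0 = Lv X Z c0 s0"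
  define Q0 where "Q0 = Qv (a^2) c0 s0"
  define L1 where "L1 = Lv X Z (Rc c0 s0) (Rs c0 s0)"
  define Q1 where "Q1 = Qv (a^2) (Rc c0 s0) (Rs c0 s0)"
  have Q0p: "Q0 > 0" unfolding Q0_def by (rule Qpos[OF b1 cs0])
  have Q1p: "Q1 > 0" unfolding Q1_def by (rule Qpos[OF b1 R_unit[OF cs0]])
  have F0: "L0 * Q1 - L1 * Q0 = 0" using F_eq[of X Z t0 "a^2"] t0
    unfolding L0_def Q0_def L1_def Q1_def c0_def s0_def by simp
  have L0nz: "L0 \<noteq> 0"
  proof
    assume L0z: "L0 = 0"
    then have "L1 = 0" using F0 Q0p by simp
    then have e2: "X * (c0 + sqrt 3 * s0) + Z * (s0 - sqrt 3 * c0) = 0" unfolding L1_def LR by simp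
    have e1: "X * c0 + Z * s0 = 0" using L0z unfolding L0_def Lv_def by simp
    have "X * (c0 + sqrt 3 * s0) + Z * (s0 - sqrt 3 * c0) = (X * c0 + Z * s0) + sqrt 3 * (X * s0 - Z * c0)"
      by (simp add: algebra_simps)
    then have "sqrt 3 * (X * s0 - Z * c0) = 0" using e1 e2 by simp
    then have e3: "X * s0 - Z * c0 = 0" by simp
    have "X = c0 * (X * c0 + Z * s0) + s0 * (X * s0 - Z * c0)"
      using cs0 by (simp add: power2_eq_square algebra_simps) (metis distrib_left mult.commute mult_1)
    then have "X = 0" using e1 e3 by simp
    moreover have "Z = s0 * (X * c0 + Z * s0) - c0 * (X * s0 - Z * c0)"
      using cs0 by (simp add: power2_eq_square algebra_simps) (metis distrib_left mult.commute mult_1 add.commute)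
    then have "Z = 0" using e1 e3 by simp
    ultimately show False using XZ by simp
  qed
  define \<rho>0 where "\<rho>0 = - L0 / Q0"
  have r0nz: "\<rho>0 \<noteq> 0" unfolding \<rho>0_def using L0nz Q0p by simp
  have E0: "L0 + \<rho>0 * Q0 = 0" unfolding \<rho>0_def using Q0p by simp
  have E1: "L1 + \<rho>0 * Q1 = 0"
  proof -
    have "L1 + \<rho>0 * Q1 = (L1 * Q0 - L0 * Q1) / Q0" unfolding \<rho>0_def using Q0p by (simp add: field_simps)
    then show ?thesis using F0 by simp
  qed
  define r0 where "r0 = (x0 + \<rho>0 * c0, y0 + \<rho>0 * s0)"
  define q0 where "q0 = (x0 + \<rho>0 * Rc c0 s0, y0 + \<rho>0 * Rs c0 s0)"
  have r0Y: "r0 \<in> ellipseY a" unfolding r0_def ell_line[OF apos pe]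
    using E0 unfolding L0_def Q0_def X_def Z_def by simp
  have q0Y: "q0 \<in> ellipseY a" unfolding q0_def ell_line[OF apos pe]
    using E1 unfolding L1_def Q1_def X_def Z_def by simp
  define T0 where "T0 = {p, q0, r0}"
  have d1: "edist2 p q0 = \<bar>\<rho>0\<bar>" unfolding p q0_def by (rule edist_line[OF R_unit[OF cs0]])
  have d2: "edist2 q0 r0 = \<bar>\<rho>0\<bar>" unfolding q0_def r0_def by (rule edist_qr[OF cs0])
  have d3: "edist2 r0 p = \<bar>\<rho>0\<bar>" using edist_line[OF cs0, of x0 y0 \<rho>0] edist2_sym
    unfolding p r0_def by metis
  show ?thesis
  proof (rule ex1I[of _ T0])
    show "equilateral_triangle T0 \<and> T0 \<subseteq> ellipseY a \<and> p \<in> T0"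
    proof (intro conjI)
      have "T0 = {p, q0, r0} \<and> edist2 p q0 > 0 \<and> edist2 p q0 = edist2 q0 r0 \<and> edist2 q0 r0 = edist2 r0 p"
        unfolding T0_def d1 d2 d3 using r0nz by simp
      then show "equilateral_triangle T0" unfolding equilateral_triangle_def by blast
      show "T0 \<subseteq> ellipseY a" unfolding T0_def using r0Y q0Y assms(3) by auto
      show "p \<in> T0" unfolding T0_def by simp
    qed
  next
    fix T assume H: "equilateral_triangle T \<and> T \<subseteq> ellipseY a \<and> p \<in> T"
    then obtain u v w where T: "T = {u, v, w}" and dpos: "edist2 u v > 0"
      and e1: "edist2 u v = edist2 v w" and e2: "edist2 v w = edist2 w u"
      unfolding equilateral_triangle_def by blast
    define d where "d = edist2 u v"
    obtain q r where Tqr: "T = {p, q, r}" "edist2 p q = d" "edist2 p r = d" "edist2 q r = d"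
    proof -
      have dd: "edist2 u v = d" "edist2 v w = d" "edist2 w u = d" using e1 e2 d_def by simp_all
      have pT: "p \<in> T" using H by simp
      show ?thesis using tri_p[OF T dd pT] that by blast
    qed
    have dp: "d > 0" using dpos d_def by simp
    obtain q' r' where T': "T = {p, q', r'}" and rn: "(fst r' - fst p)^2 + (snd r' - snd p)^2 = d^2"
      and qc: "fst q' - fst p = Rc (fst r' - fst p) (snd r' - snd p)"
      and qs: "snd q' - snd p = Rs (fst r' - fst p) (snd r' - snd p)"
      using canon[OF Tqr dp] by blast
    have "((fst r' - fst p) / d)^2 + ((snd r' - snd p) / d)^2 = 1"
      using rn dp by (simp add: power_divide add_divide_distrib[symmetric])
    then obtain t where ct: "(fst r' - fst p) / d = cos t" and st: "(snd r' - snd p) / d = sin t"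
      by (rule sincos_total_2pi) auto
    have w1: "fst r' - fst p = d * cos t" and w2: "snd r' - snd p = d * sin t"
      using ct st dp by (auto simp: field_simps)
    have r'e: "r' = (x0 + d * cos t, y0 + d * sin t)" using w1 w2 p by (cases r') auto
    have q'e: "q' = (x0 + d * Rc (cos t) (sin t), y0 + d * Rs (cos t) (sin t))"
      using qc qs p unfolding w1 w2 Rc_scale Rs_scale by (cases q') auto
    have sub: "T \<subseteq> ellipseY a" using H by simp
    have r'Y: "r' \<in> ellipseY a" and q'Y: "q' \<in> ellipseY a" using sub unfolding T' by simp_all
    define L where "L = Lv X Z (cos t) (sin t)"
    define Q where "Q = Qv (a^2) (cos t) (sin t)"
    define L' where "L' = Lv X Z (Rc (cos t) (sin t)) (Rs (cos t) (sin t))"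
    define Q' where "Q' = Qv (a^2) (Rc (cos t) (sin t)) (Rs (cos t) (sin t))"
    have EL: "L + d * Q = 0"
      using r'Y dp unfolding r'e ell_line[OF apos pe] L_def Q_def X_def Z_def by simp
    have EL': "L' + d * Q' = 0"
      using q'Y dp unfolding q'e ell_line[OF apos pe] L'_def Q'_def X_def Z_def by simp
    have "Ft (a^2) X Z t = L * Q' - L' * Q"
      using F_eq[of X Z t "a^2"] unfolding L_def Q_def L'_def Q'_def by simp
    also have "\<dots> = 0"
    proof -
      have "L = - d * Q" "L' = - d * Q'" using EL EL' by (simp_all add: algebra_simps)
      then show ?thesis by simp
    qed
    finally have "Ft (a^2) X Z t = 0" .
    from tu[OF this] show "T = T0"
    proof
      assume h: "cos t = cos t0 \<and> sin t = sin t0"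
      then have "L = L0" "Q = Q0" unfolding L_def L0_def Q_def Q0_def c0_def s0_def by simp_all
      then have "d = \<rho>0" using EL Q0p unfolding \<rho>0_def by (simp add: field_simps)
      then have "r' = r0" "q' = q0" unfolding r'e q'e r0_def q0_def using h c0_def s0_def by simp_all
      then show ?thesis using T' T0_def by simp
    next
      assume h: "cos t = - cos t0 \<and> sin t = - sin t0"
      then have "L = - L0" "Q = Q0" unfolding L_def L0_def Q_def Q0_def c0_def s0_def Lv_def Qv_def
        by (simp_all add: algebra_simps)
      then have "d = - \<rho>0" using EL Q0p unfolding \<rho>0_def by (simp add: field_simps)
      moreover have "Rc (cos t) (sin t) = - Rc c0 s0" "Rs (cos t) (sin t) = - Rs c0 s0"
        using h Rc_scale[of "-1" c0 s0] Rs_scale[of "-1" c0 s0] unfolding c0_def s0_def by simp_all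
      ultimately have "r' = r0" "q' = q0" unfolding r'e q'e r0_def q0_def using h c0_def s0_def by simp_all
      then show ?thesis using T' T0_def by simp
    qed
  qed
qed

end
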